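(* Let $\alpha\ge1$ and $b\in(0,1]$. Let $\nu,\mu$ be the Gibbs distributions of two Ising models $(G,J^\nu,h^\nu)$ and $(G,J^\mu,h^\mu)$ that are both $b$-marginally bounded. Then $$D_{\chi^\alpha}(\nu\|\mu)\ \ge\ \frac{b^{2\alpha}}{2}\, d_{\mathrm{par}}(\nu,\mu)^\alpha .$$
   Context: An Ising model $(G,J,h)$ on $G=(V,E)$ consists of a symmetric $J\in\mathbb{R}^{V\times V}$ with $J_{uv}\ne0$ only if $\{u,v\}\in E$, and $h\in\mathbb{R}^V$; its Gibbs distribution on $\{-1,+1\}^V$ is $\mu(\sigma)\propto\exp(\tfrac12\sigma^TJ\sigma+h^T\sigma)$. The $\chi^\alpha$-divergence is $D_{\chi^\alpha}(\nu\|\mu)=\sum_\sigma\mu(\sigma)\cdot\frac12\left|\frac{\nu(\sigma)}{\mu(\sigma)}-1\right|^\alpha$. The parameter distance is $d_{\mathrm{par}}(\nu,\mu)=\max\left\{\max_{u,v}|J^\nu_{uv}-J^\mu_{uv}|,\ \max_{v\in V}\frac{|h^\nu(v)-h^\mu(v)|}{\deg(v)+1}\right\}$, with $\deg(v)$ the degree of $v$ in $G$. $\mu$ is $b$-marginally bounded if for every $\Lambda\subseteq V$, pinning $\sigma\in\{-1,+1\}^\Lambda$, $v\notin\Lambda$, $c\in\{-1,+1\}$, the conditional marginal probability that $v$ takes value $c$ given $\sigma$ on $\Lambda$ is at least $b$. *)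

theory Defs
  imports Complex_Main
begin

text \<open>Vertices: a finite type 'v (V = UNIV). A simple graph is a symmetric,
irreflexive adjacency relation E. Spin configurations are 'v \<Rightarrow> bool,
with True meaning +1 and False meaning -1.\<close>

definition simple_graph :: "('v \<Rightarrow> 'v \<Rightarrow> bool) \<Rightarrow> bool" where
  "simple_graph E \<longleftrightarrow> (\<forall>u v. E u v \<longleftrightarrow> E v u) \<and> (\<forall>v. \<not> E v v)"

definition deg :: "('v \<Rightarrow> 'v \<Rightarrow> bool) \<Rightarrow> 'v \<Rightarrow> nat" where
  "deg E v = card {u. E u v}"

definition ising_model :: "('v \<Rightarrow> 'v \<Rightarrow> bool) \<Rightarrow> ('v \<Rightarrow> 'v \<Rightarrow> real) \<Rightarrow> ('v \<Rightarrow> real) \<Rightarrow> bool" where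
  "ising_model E J h \<longleftrightarrow> (\<forall>u v. J u v = J v u) \<and> (\<forall>u v. J u v \<noteq> 0 \<longrightarrow> E u v)"

definition spin :: "('v \<Rightarrow> bool) \<Rightarrow> 'v \<Rightarrow> real" where
  "spin \<sigma> v = (if \<sigma> v then 1 else -1)"

definition ising_weight :: "('v::finite \<Rightarrow> 'v \<Rightarrow> real) \<Rightarrow> ('v \<Rightarrow> real) \<Rightarrow> ('v \<Rightarrow> bool) \<Rightarrow> real" where
  "ising_weight J h \<sigma> =
     exp ((1/2) * (\<Sum>u\<in>UNIV. \<Sum>v\<in>UNIV. spin \<sigma> u * J u v * spin \<sigma> v) + (\<Sum>v\<in>UNIV. h v * spin \<sigma> v))"

definition gibbs :: "('v::finite \<Rightarrow> 'v \<Rightarrow> real) \<Rightarrow> ('v \<Rightarrow> real) \<Rightarrow> ('v \<Rightarrow> bool) \<Rightarrow> real" where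
  "gibbs J h \<sigma> = ising_weight J h \<sigma> / (\<Sum>\<tau>\<in>UNIV. ising_weight J h \<tau>)"

definition cond_marginal :: "(('v::finite \<Rightarrow> bool) \<Rightarrow> real) \<Rightarrow> 'v set \<Rightarrow> ('v \<Rightarrow> bool) \<Rightarrow> 'v \<Rightarrow> bool \<Rightarrow> real" where
  "cond_marginal \<mu> \<Lambda> \<tau> v c =
     (\<Sum>\<sigma>\<in>{\<sigma>. (\<forall>u\<in>\<Lambda>. \<sigma> u = \<tau> u) \<and> \<sigma> v = c}. \<mu> \<sigma>) /
     (\<Sum>\<sigma>\<in>{\<sigma>. \<forall>u\<in>\<Lambda>. \<sigma> u = \<tau> u}. \<mu> \<sigma>)"

definition marginally_bounded :: "real \<Rightarrow> (('v::finite \<Rightarrow> bool) \<Rightarrow> real) \<Rightarrow> bool" where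
  "marginally_bounded b \<mu> \<longleftrightarrow>
     (\<forall>\<Lambda> \<tau> v c. v \<notin> \<Lambda> \<longrightarrow> cond_marginal \<mu> \<Lambda> \<tau> v c \<ge> b)"

definition chi_alpha_div :: "real \<Rightarrow> (('v::finite \<Rightarrow> bool) \<Rightarrow> real) \<Rightarrow> (('v \<Rightarrow> bool) \<Rightarrow> real) \<Rightarrow> real" where
  "chi_alpha_div \<alpha> \<nu> \<mu> = (\<Sum>\<sigma>\<in>UNIV. \<mu> \<sigma> * ((1/2) * \<bar>\<nu> \<sigma> / \<mu> \<sigma> - 1\<bar> powr \<alpha>))"

definition d_par :: "('v::finite \<Rightarrow> 'v \<Rightarrow> bool) \<Rightarrow> ('v \<Rightarrow> 'v \<Rightarrow> real) \<Rightarrow> ('v \<Rightarrow> real)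
                      \<Rightarrow> ('v \<Rightarrow> 'v \<Rightarrow> real) \<Rightarrow> ('v \<Rightarrow> real) \<Rightarrow> real" where
  "d_par E J1 h1 J2 h2 =
     max (Max ((\<lambda>(u, v). \<bar>J1 u v - J2 u v\<bar>) ` UNIV))
         (Max ((\<lambda>v. \<bar>h1 v - h2 v\<bar> / (real (deg E v) + 1)) ` UNIV))"

end

theory Submission
  imports Defs "HOL-Analysis.Analysis"
begin


definition flip :: "'v \<Rightarrow> ('v \<Rightarrow> bool) \<Rightarrow> ('v \<Rightarrow> bool)" where
  "flip w \<sigma> = \<sigma>(w := \<not> \<sigma> w)"

definition xf :: "('v::finite \<Rightarrow> 'v \<Rightarrow> real) \<Rightarrow> ('v \<Rightarrow> real) \<Rightarrow> 'v \<Rightarrow> ('v \<Rightarrow> bool) \<Rightarrow> real" where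
  "xf J h v \<sigma> = (\<Sum>u\<in>UNIV. J v u * spin \<sigma> u) + h v"

lemma flip_flip[simp]: "flip w (flip w \<sigma>) = \<sigma>"
  by (auto simp: flip_def)

lemma sum_flip:
  fixes f :: "('v::finite \<Rightarrow> bool) \<Rightarrow> 'a::comm_monoid_add"
  shows "(\<Sum>\<sigma>\<in>UNIV. f (flip w \<sigma>)) = (\<Sum>\<sigma>\<in>UNIV. f \<sigma>)"
  by (rule sum.reindex_bij_witness[of _ "flip w" "flip w"]) auto

lemma weight_pos: "ising_weight J h \<sigma> > 0"
  by (simp add: ising_weight_def)

lemma Z_pos: "(\<Sum>\<tau>\<in>(UNIV::('v::finite \<Rightarrow> bool) set). ising_weight J h \<tau>) > 0"
  by (rule sum_pos) (auto simp: weight_pos)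

lemma gibbs_pos: "gibbs J h \<sigma> > 0"
  unfolding gibbs_def using weight_pos Z_pos by (intro divide_pos_pos)

lemma gibbs_sum: "(\<Sum>\<sigma>\<in>UNIV. gibbs J h \<sigma>) = 1"
  unfolding gibbs_def using Z_pos[of J h] by (simp add: sum_divide_distrib[symmetric])

lemma xf_upd:
  assumes "J v v = 0"
  shows "xf J h v (\<sigma>(v := c)) = xf J h v \<sigma>"
  unfolding xf_def
  by (intro arg_cong[where f="\<lambda>x. x + h v"] sum.cong) (auto simp: spin_def assms)

lemma spin_upd: "spin (\<sigma>(v:=True)) u = spin (\<sigma>(v:=False)) u + 2 * (if u = v then 1 else 0)"
  by (simp add: spin_def)

lemma sum_if_const: "(\<Sum>w\<in>S. if P then f w else 0) = (if P then (\<Sum>w\<in>S. f w) else 0)"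
  by auto

lemma quad_diff:
  fixes s :: "'v::finite \<Rightarrow> real"
  shows "(\<Sum>u\<in>UNIV. \<Sum>w\<in>UNIV. (s u + 2 * (if u = v then 1 else 0)) * J u w * (s w + 2 * (if w = v then 1 else 0)))
     = (\<Sum>u\<in>UNIV. \<Sum>w\<in>UNIV. s u * J u w * s w) + 2 * (\<Sum>w\<in>UNIV. J v w * s w) + 2 * (\<Sum>u\<in>UNIV. s u * J u v) + 4 * J v v"
proof -
  have e: "(s u + 2 * (if u = v then 1 else 0)) * J u w * (s w + 2 * (if w = v then 1 else 0))
    = s u * J u w * s w + 2 * (if u = v then J v w * s w else 0) + 2 * (if w = v then s u * J u v else 0)
      + 4 * (if u = v then (if w = v then J v v else 0) else 0)" for u w
    by (auto simp: algebra_simps)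
  have "(\<Sum>u\<in>UNIV. \<Sum>w\<in>UNIV. (s u + 2 * (if u = v then 1 else 0)) * J u w * (s w + 2 * (if w = v then 1 else 0)))
     = (\<Sum>u\<in>UNIV. \<Sum>w\<in>UNIV. s u * J u w * s w) + (\<Sum>u\<in>UNIV. \<Sum>w\<in>UNIV. 2 * (if u = v then J v w * s w else 0))
       + (\<Sum>u\<in>UNIV. \<Sum>w\<in>UNIV. 2 * (if w = v then s u * J u v else 0))
       + (\<Sum>u\<in>UNIV. \<Sum>w\<in>UNIV. 4 * (if u = v then (if w = v then J v v else 0) else 0))"
    unfolding e by (simp only: sum.distrib)
  also have "\<dots> = (\<Sum>u\<in>UNIV. \<Sum>w\<in>UNIV. s u * J u w * s w) + 2 * (\<Sum>w\<in>UNIV. J v w * s w) + 2 * (\<Sum>u\<in>UNIV. s u * J u v) + 4 * J v v"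
    by (simp add: sum_distrib_left[symmetric] sum.delta sum_if_const if_distrib[of "\<lambda>x. 2 * x"] if_distrib[of "\<lambda>x. 4 * x"] cong: if_cong)
  finally show ?thesis .
qed

lemma weight_ratio:
  assumes sym: "\<And>u w. J u w = J w u" and J0: "J v v = 0"
  shows "ising_weight J h (\<sigma>(v:=True)) = exp (2 * xf J h v \<sigma>) * ising_weight J h (\<sigma>(v:=False))"
proof -
  define s where "s = spin (\<sigma>(v:=False))"
  have s1: "spin (\<sigma>(v:=True)) = (\<lambda>u. s u + 2 * (if u = v then 1 else 0))"
    unfolding s_def by (rule ext) (rule spin_upd)
  have lin: "(\<Sum>u\<in>UNIV. h u * (s u + 2 * (if u = v then 1 else 0))) = (\<Sum>u\<in>UNIV. h u * s u) + 2 * h v"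
  proof -
    have "h u * (s u + 2 * (if u = v then 1 else 0)) = h u * s u + (if u = v then 2 * h v else 0)" for u
      by (auto simp: algebra_simps)
    then show ?thesis by (simp add: sum.distrib)
  qed
  have sym2: "(\<Sum>u\<in>UNIV. s u * J u v) = (\<Sum>w\<in>UNIV. J v w * s w)"
    by (intro sum.cong) (auto simp: sym)
  have xf: "xf J h v \<sigma> = (\<Sum>w\<in>UNIV. J v w * s w) + h v"
    using xf_upd[of J v h \<sigma> False, OF J0] by (simp add: xf_def s_def)
  show ?thesis
    unfolding ising_weight_def s1 quad_diff lin sym2 J0 exp_add[symmetric]
    by (intro arg_cong[where f=exp]) (simp add: xf s_def algebra_simps)
qed



lemma gibbs_ratio:
  assumes sym: "\<And>u w. J u w = J w u" and J0: "J v v = 0"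
  shows "gibbs J h (\<sigma>(v:=True)) = exp (2 * xf J h v \<sigma>) * gibbs J h (\<sigma>(v:=False))"
  unfolding gibbs_def weight_ratio[where J=J and v=v, OF sym J0] by simp

lemma K:
  assumes mb: "marginally_bounded b (gibbs J h)"
  shows "b * (gibbs J h \<sigma> + gibbs J h (flip w \<sigma>)) \<le> gibbs J h \<sigma>"
proof -
  have "cond_marginal (gibbs J h) (- {w}) \<sigma> w (\<sigma> w) \<ge> b"
    using mb unfolding marginally_bounded_def by auto
  moreover have s1: "{\<sigma>'. (\<forall>u\<in>- {w}. \<sigma>' u = \<sigma> u) \<and> \<sigma>' w = \<sigma> w} = {\<sigma>}"
    by (auto simp: fun_eq_iff)
  moreover have s2: "{\<sigma>'. (\<forall>u\<in>- {w}. \<sigma>' u = \<sigma> u)} = {\<sigma>, flip w \<sigma>}"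
    by (auto simp: fun_eq_iff flip_def)
  moreover have "\<sigma> \<noteq> flip w \<sigma>" by (auto simp: flip_def fun_eq_iff)
  ultimately have "b \<le> gibbs J h \<sigma> / (gibbs J h \<sigma> + gibbs J h (flip w \<sigma>))"
    unfolding cond_marginal_def by simp
  moreover have "gibbs J h \<sigma> + gibbs J h (flip w \<sigma>) > 0"
    using gibbs_pos[of J h] by (simp add: add_pos_pos)
  ultimately show ?thesis by (simp add: field_simps)
qed

lemma Lln:
  fixes b p q :: real
  assumes "0 < b" "b \<le> p" "b \<le> 1 - p" "b \<le> q" "b \<le> 1 - q" "q \<le> p"
  shows "ln (p/(1-p)) - ln (q/(1-q)) \<le> 2 * (p - q) / b"
proof -
  have pos: "p > 0" "1 - p > 0" "q > 0" "1 - q > 0" using assms by linarith+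
  have e: "ln (p/(1-p)) - ln (q/(1-q)) = ln (p/q) + ln ((1-q)/(1-p))"
    using pos by (simp add: ln_divide_pos)
  have a: "ln (p/q) \<le> (p - q) / b"
  proof -
    have "ln (p/q) \<le> p/q - 1" using pos by (intro ln_le_minus_one) simp
    also have "\<dots> = (p - q)/q" using pos by (simp add: field_simps)
    also have "\<dots> \<le> (p - q)/b" using assms pos by (intro divide_left_mono) auto
    finally show ?thesis .
  qed
  have c: "ln ((1-q)/(1-p)) \<le> (p - q) / b"
  proof -
    have "ln ((1-q)/(1-p)) \<le> (1-q)/(1-p) - 1" using pos by (intro ln_le_minus_one) simp
    also have "\<dots> = (p - q)/(1-p)" using pos by (simp add: field_simps)
    also have "\<dots> \<le> (p - q)/b" using assms pos by (intro divide_left_mono) auto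
    finally show ?thesis .
  qed
  have "(p - q)/b + (p - q)/b = 2 * (p - q) / b" by (simp add: field_simps)
  then show ?thesis using e a c by linarith
qed

lemma Lln_abs:
  fixes b p q :: real
  assumes "0 < b" "b \<le> p" "b \<le> 1 - p" "b \<le> q" "b \<le> 1 - q"
  shows "\<bar>ln (p/(1-p)) - ln (q/(1-q))\<bar> \<le> 2 * \<bar>p - q\<bar> / b"
proof (cases "q \<le> p")
  case True
  have "ln (q/(1-q)) \<le> ln (p/(1-p))"
    using assms True by (subst ln_le_cancel_iff) (auto intro!: frac_le)
  then show ?thesis using Lln[OF assms True] True by simp
next
  case False
  have "ln (p/(1-p)) \<le> ln (q/(1-q))"
    using assms False by (subst ln_le_cancel_iff) (auto intro!: frac_le)
  then show ?thesis using Lln[of b q p] assms False by simp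
qed

lemma logit_eq:
  fixes a a' :: real
  assumes "a > 0" "a' > 0"
  shows "ln ((a/(a+a'))/(1 - a/(a+a'))) = ln a - ln a'"
proof -
  have "1 - a/(a+a') = a'/(a+a')" using assms by (simp add: field_simps)
  then have "(a/(a+a'))/(1 - a/(a+a')) = a / a'" using assms by simp
  then show ?thesis using assms by (simp add: ln_divide_pos)
qed

lemma ln_ratio_flip:
  assumes sym: "\<And>u w. J u w = J w u" and J0: "J v v = 0"
  shows "ln (gibbs J h \<sigma>) - ln (gibbs J h (flip v \<sigma>)) = (if \<sigma> v then 2 else -2) * xf J h v \<sigma>"
proof (cases "\<sigma> v")
  case True
  then have "\<sigma> = \<sigma>(v:=True)" "flip v \<sigma> = \<sigma>(v:=False)" by (auto simp: flip_def fun_eq_iff)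
  then have "gibbs J h \<sigma> = exp (2 * xf J h v \<sigma>) * gibbs J h (flip v \<sigma>)"
    using gibbs_ratio[where J=J and v=v and h=h and \<sigma>=\<sigma>, OF sym J0] by metis
  then show ?thesis using True gibbs_pos[of J h "flip v \<sigma>"] by (simp add: ln_mult)
next
  case False
  then have "\<sigma> = \<sigma>(v:=False)" "flip v \<sigma> = \<sigma>(v:=True)" by (auto simp: flip_def fun_eq_iff)
  then have "gibbs J h (flip v \<sigma>) = exp (2 * xf J h v \<sigma>) * gibbs J h \<sigma>"
    using gibbs_ratio[where J=J and v=v and h=h and \<sigma>=\<sigma>, OF sym J0] by metis
  then show ?thesis using False gibbs_pos[of J h \<sigma>] by (simp add: ln_mult)
qed

lemma pointwise:
  assumes "0 < b"
    and sym1: "\<And>u w. J1 u w = J1 w u" and J10: "J1 v v = 0"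
    and sym2: "\<And>u w. J2 u w = J2 w u" and J20: "J2 v v = 0"
    and mb1: "marginally_bounded b (gibbs J1 h1)"
    and mb2: "marginally_bounded b (gibbs J2 h2)"
  shows "b * \<bar>xf J1 h1 v \<sigma> - xf J2 h2 v \<sigma>\<bar> \<le>
    \<bar>gibbs J1 h1 \<sigma> / (gibbs J1 h1 \<sigma> + gibbs J1 h1 (flip v \<sigma>)) - gibbs J2 h2 \<sigma> / (gibbs J2 h2 \<sigma> + gibbs J2 h2 (flip v \<sigma>))\<bar>"
proof -
  define a a' c c' where "a = gibbs J1 h1 \<sigma>" "a' = gibbs J1 h1 (flip v \<sigma>)"
    "c = gibbs J2 h2 \<sigma>" "c' = gibbs J2 h2 (flip v \<sigma>)"
  have pos: "a > 0" "a' > 0" "c > 0" "c' > 0" unfolding a_a'_c_c'_def by (auto simp: gibbs_pos)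
  have ka: "b * (a + a') \<le> a" "b * (a + a') \<le> a'"
    using K[OF mb1, of \<sigma> v] K[OF mb1, of "flip v \<sigma>" v] unfolding a_a'_c_c'_def by (auto simp: add.commute)
  have kc: "b * (c + c') \<le> c" "b * (c + c') \<le> c'"
    using K[OF mb2, of \<sigma> v] K[OF mb2, of "flip v \<sigma>" v] unfolding a_a'_c_c'_def by (auto simp: add.commute)
  define p q where "p = a/(a+a')" "q = c/(c+c')"
  have pb: "b \<le> p" "b \<le> 1 - p" "b \<le> q" "b \<le> 1 - q"
    using ka kc pos unfolding p_q_def by (auto simp: field_simps)
  have d: "ln (p/(1-p)) - ln (q/(1-q)) = (if \<sigma> v then 2 else -2) * (xf J1 h1 v \<sigma> - xf J2 h2 v \<sigma>)"
    unfolding p_q_def logit_eq[OF pos(1,2)] logit_eq[OF pos(3,4)]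
    unfolding a_a'_c_c'_def ln_ratio_flip[where J=J1 and v=v, OF sym1 J10] ln_ratio_flip[where J=J2 and v=v, OF sym2 J20]
    by (simp add: algebra_simps)
  have "\<bar>ln (p/(1-p)) - ln (q/(1-q))\<bar> = 2 * \<bar>xf J1 h1 v \<sigma> - xf J2 h2 v \<sigma>\<bar>"
    unfolding d abs_mult by (cases "\<sigma> v") simp_all
  then have "2 * \<bar>xf J1 h1 v \<sigma> - xf J2 h2 v \<sigma>\<bar> \<le> 2 * \<bar>p - q\<bar> / b"
    using Lln_abs[OF \<open>0<b\<close> pb] by simp
  then show ?thesis using \<open>0 < b\<close> unfolding p_q_def a_a'_c_c'_def by (simp add: field_simps)
qed



lemma basic_ineq:
  fixes a a' c c' :: real
  assumes "a > 0" "a' > 0" "c > 0" "c' > 0"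
  shows "(c + c') * \<bar>a/(a+a') - c/(c+c')\<bar> \<le> \<bar>a - c\<bar> + \<bar>a' - c'\<bar>"
proof -
  have N: "a + a' > 0" "c + c' > 0" using assms by auto
  have "(c+c')*(a/(a+a') - c/(c+c')) = (c+c')*a/(a+a') - c"
    using N by (simp add: right_diff_distrib)
  also have "\<dots> = (c+c')*a/(a+a') - c*(a+a')/(a+a')"
    using N by simp
  also have "\<dots> = ((c+c')*a - c*(a+a'))/(a+a')"
    by (rule diff_divide_distrib[symmetric])
  also have "\<dots> = (a'*(a-c) + a*(c'-a'))/(a+a')"
    by (simp add: algebra_simps)
  also have "\<dots> = (a'/(a+a'))*(a-c) + (a/(a+a'))*(c'-a')"
    by (simp add: add_divide_distrib)
  finally have e: "(c+c')*(a/(a+a') - c/(c+c')) = (a'/(a+a'))*(a-c) + (a/(a+a'))*(c'-a')" .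
  have s: "a'/(a+a') + a/(a+a') = 1" using N by (simp add: add_divide_distrib[symmetric])
  have n: "a'/(a+a') \<ge> 0" "a/(a+a') \<ge> 0" using assms by auto
  have "(c + c') * \<bar>a/(a+a') - c/(c+c')\<bar> = \<bar>(a'/(a+a'))*(a-c) + (a/(a+a'))*(c'-a')\<bar>"
  proof -
    have "(c + c') * \<bar>a/(a+a') - c/(c+c')\<bar> = \<bar>(c + c') * (a/(a+a') - c/(c+c'))\<bar>"
      using N by (simp add: abs_mult)
    then show ?thesis by (simp only: e)
  qed
  also have "\<dots> \<le> (a'/(a+a'))*\<bar>a-c\<bar> + (a/(a+a'))*\<bar>c'-a'\<bar>"
  proof -
    have gen: "\<bar>x*y + z*w\<bar> \<le> x*\<bar>y\<bar> + z*\<bar>w\<bar>" if "x \<ge> 0" "z \<ge> 0" for x y z w :: real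
      using that abs_triangle_ineq[of "x*y" "z*w"] by (simp add: abs_mult)
    show ?thesis by (rule gen[OF n])
  qed
  also have "\<dots> \<le> \<bar>a - c\<bar> + \<bar>a' - c'\<bar>"
  proof -
    have "(a'/(a+a'))*\<bar>a-c\<bar> \<le> \<bar>a-c\<bar>" "(a/(a+a'))*\<bar>c'-a'\<bar> \<le> \<bar>a'-c'\<bar>"
    proof -
      have l: "a'/(a+a') \<le> 1" "a/(a+a') \<le> 1" using n s by linarith+
      show "(a'/(a+a'))*\<bar>a-c\<bar> \<le> \<bar>a-c\<bar>"
        by (rule mult_left_le_one_le) (use n l in auto)
      have "(a/(a+a'))*\<bar>c'-a'\<bar> \<le> \<bar>c'-a'\<bar>"
        by (rule mult_left_le_one_le) (use n l in auto)
      then show "(a/(a+a'))*\<bar>c'-a'\<bar> \<le> \<bar>a'-c'\<bar>" by (simp only: abs_minus_commute)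
    qed
    then show ?thesis by linarith
  qed
  finally show ?thesis .
qed

lemma step3:
  fixes nu mu :: "('v::finite \<Rightarrow> bool) \<Rightarrow> real" and X :: "('v \<Rightarrow> bool) \<Rightarrow> real"
  assumes nu: "\<And>\<sigma>. nu \<sigma> > 0" and mu: "\<And>\<sigma>. mu \<sigma> > 0"
    and pw: "\<And>\<sigma>. b * \<bar>X \<sigma>\<bar> \<le> \<bar>nu \<sigma> / (nu \<sigma> + nu (flip v \<sigma>)) - mu \<sigma> / (mu \<sigma> + mu (flip v \<sigma>))\<bar>"
    and Xf: "\<And>\<sigma>. X (flip v \<sigma>) = X \<sigma>" and b: "b \<ge> 0"
  shows "b * (\<Sum>\<sigma>\<in>UNIV. mu \<sigma> * \<bar>X \<sigma>\<bar>) \<le> (\<Sum>\<sigma>\<in>UNIV. \<bar>nu \<sigma> - mu \<sigma>\<bar>)"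
proof -
  have pt: "b * (mu \<sigma> * \<bar>X \<sigma>\<bar> + mu (flip v \<sigma>) * \<bar>X (flip v \<sigma>)\<bar>)
      \<le> \<bar>nu \<sigma> - mu \<sigma>\<bar> + \<bar>nu (flip v \<sigma>) - mu (flip v \<sigma>)\<bar>" for \<sigma>
  proof -
    have m: "mu \<sigma> + mu (flip v \<sigma>) \<ge> 0" using mu[of \<sigma>] mu[of "flip v \<sigma>"] by simp
    have "b * (mu \<sigma> * \<bar>X \<sigma>\<bar> + mu (flip v \<sigma>) * \<bar>X (flip v \<sigma>)\<bar>) = (mu \<sigma> + mu (flip v \<sigma>)) * (b * \<bar>X \<sigma>\<bar>)"
      by (simp add: Xf algebra_simps)
    also have "\<dots> \<le> (mu \<sigma> + mu (flip v \<sigma>)) * \<bar>nu \<sigma> / (nu \<sigma> + nu (flip v \<sigma>)) - mu \<sigma> / (mu \<sigma> + mu (flip v \<sigma>))\<bar>"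
      using m pw by (rule mult_left_mono[rotated])
    also have "\<dots> \<le> \<bar>nu \<sigma> - mu \<sigma>\<bar> + \<bar>nu (flip v \<sigma>) - mu (flip v \<sigma>)\<bar>"
      using nu mu by (intro basic_ineq) auto
    finally show ?thesis .
  qed
  have "b * (\<Sum>\<sigma>\<in>UNIV. mu \<sigma> * \<bar>X \<sigma>\<bar>) * 2 = (\<Sum>\<sigma>\<in>UNIV. b * (mu \<sigma> * \<bar>X \<sigma>\<bar> + mu (flip v \<sigma>) * \<bar>X (flip v \<sigma>)\<bar>))"
    by (simp add: sum.distrib sum_distrib_left[symmetric] distrib_left sum_flip[where f="\<lambda>\<sigma>. mu \<sigma> * \<bar>X \<sigma>\<bar>"])
  also have "\<dots> \<le> (\<Sum>\<sigma>\<in>UNIV. \<bar>nu \<sigma> - mu \<sigma>\<bar> + \<bar>nu (flip v \<sigma>) - mu (flip v \<sigma>)\<bar>)"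
    by (intro sum_mono pt)
  also have "\<dots> = (\<Sum>\<sigma>\<in>UNIV. \<bar>nu \<sigma> - mu \<sigma>\<bar>) * 2"
    by (simp add: sum.distrib sum_flip[where f="\<lambda>\<sigma>. \<bar>nu \<sigma> - mu \<sigma>\<bar>"])
  finally show ?thesis by simp
qed

lemma step5:
  fixes mu :: "('v::finite \<Rightarrow> bool) \<Rightarrow> real" and X :: "('v \<Rightarrow> bool) \<Rightarrow> real"
  assumes mu: "\<And>\<sigma>. mu \<sigma> \<ge> 0" and K: "\<And>\<sigma>. b * (mu \<sigma> + mu (flip w \<sigma>)) \<le> mu \<sigma>"
    and c: "\<And>\<sigma>. c \<le> \<bar>X \<sigma> - X (flip w \<sigma>)\<bar>" and s: "(\<Sum>\<sigma>\<in>UNIV. mu \<sigma>) = 1" and b: "b \<ge> 0"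
  shows "b * c \<le> (\<Sum>\<sigma>\<in>UNIV. mu \<sigma> * \<bar>X \<sigma>\<bar>)"
proof -
  have pt: "b * c * (mu \<sigma> + mu (flip w \<sigma>)) \<le> mu \<sigma> * \<bar>X \<sigma>\<bar> + mu (flip w \<sigma>) * \<bar>X (flip w \<sigma>)\<bar>" for \<sigma>
  proof -
    define m where "m = mu \<sigma> + mu (flip w \<sigma>)"
    have m0: "m \<ge> 0" using mu[of \<sigma>] mu[of "flip w \<sigma>"] unfolding m_def by simp
    have k1: "b * m \<le> mu \<sigma>" using K[of \<sigma>] unfolding m_def .
    have k2: "b * m \<le> mu (flip w \<sigma>)" using K[of "flip w \<sigma>"] unfolding m_def by (simp add: add.commute)
    have "b * c * m \<le> b * m * (\<bar>X \<sigma>\<bar> + \<bar>X (flip w \<sigma>)\<bar>)"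
    proof -
      have "c \<le> \<bar>X \<sigma>\<bar> + \<bar>X (flip w \<sigma>)\<bar>" using c[of \<sigma>] by linarith
      then have "b * m * c \<le> b * m * (\<bar>X \<sigma>\<bar> + \<bar>X (flip w \<sigma>)\<bar>)"
        using b m0 by (intro mult_left_mono) auto
      then show ?thesis by (simp add: ac_simps)
    qed
    also have "\<dots> = b * m * \<bar>X \<sigma>\<bar> + b * m * \<bar>X (flip w \<sigma>)\<bar>" by (simp add: algebra_simps)
    also have "\<dots> \<le> mu \<sigma> * \<bar>X \<sigma>\<bar> + mu (flip w \<sigma>) * \<bar>X (flip w \<sigma>)\<bar>"
      using k1 k2 by (intro add_mono mult_right_mono) auto
    finally show ?thesis unfolding m_def .
  qed
  have "b * c * 2 = (\<Sum>\<sigma>\<in>UNIV. b * c * (mu \<sigma> + mu (flip w \<sigma>)))"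
    by (simp add: sum.distrib sum_distrib_left[symmetric] s sum_flip[where f=mu])
  also have "\<dots> \<le> (\<Sum>\<sigma>\<in>UNIV. mu \<sigma> * \<bar>X \<sigma>\<bar> + mu (flip w \<sigma>) * \<bar>X (flip w \<sigma>)\<bar>)"
    by (intro sum_mono pt)
  also have "\<dots> = (\<Sum>\<sigma>\<in>UNIV. mu \<sigma> * \<bar>X \<sigma>\<bar>) * 2"
    by (simp add: sum.distrib sum_flip[where f="\<lambda>\<sigma>. mu \<sigma> * \<bar>X \<sigma>\<bar>"])
  finally show ?thesis by simp
qed

lemma xf_flip_diff:
  "xf J h v \<sigma> - xf J h v (flip w \<sigma>) = 2 * J v w * spin \<sigma> w"
proof -
  have "J v u * spin \<sigma> u - J v u * spin (flip w \<sigma>) u = (if u = w then 2 * J v w * spin \<sigma> w else 0)" for u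
    by (auto simp: flip_def spin_def)
  then have "(\<Sum>u\<in>UNIV. J v u * spin \<sigma> u) - (\<Sum>u\<in>UNIV. J v u * spin (flip w \<sigma>) u) = 2 * J v w * spin \<sigma> w"
    by (simp add: sum_subtractf[symmetric])
  then show ?thesis unfolding xf_def by simp
qed

lemma abs_spin[simp]: "\<bar>spin \<sigma> w\<bar> = 1"
  by (simp add: spin_def)

lemma xdiff_flip:
  "\<bar>(xf J1 h1 v \<sigma> - xf J2 h2 v \<sigma>) - (xf J1 h1 v (flip w \<sigma>) - xf J2 h2 v (flip w \<sigma>))\<bar> = 2 * \<bar>J1 v w - J2 v w\<bar>"
proof -
  have "(xf J1 h1 v \<sigma> - xf J2 h2 v \<sigma>) - (xf J1 h1 v (flip w \<sigma>) - xf J2 h2 v (flip w \<sigma>))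
     = 2 * (J1 v w - J2 v w) * spin \<sigma> w"
    using xf_flip_diff[of J1 h1 v \<sigma> w] xf_flip_diff[of J2 h2 v \<sigma> w] by (simp add: algebra_simps)
  then show ?thesis by (simp only: abs_mult abs_spin)
qed

lemma xdiff_h:
  "\<bar>h1 v - h2 v\<bar> \<le> \<bar>xf J1 h1 v \<sigma> - xf J2 h2 v \<sigma>\<bar> + (\<Sum>u\<in>UNIV. \<bar>J1 v u - J2 v u\<bar>)"
proof -
  have e: "xf J1 h1 v \<sigma> - xf J2 h2 v \<sigma> = (\<Sum>u\<in>UNIV. (J1 v u - J2 v u) * spin \<sigma> u) + (h1 v - h2 v)"
    unfolding xf_def by (simp add: sum_subtractf[symmetric] algebra_simps)
  have "\<bar>\<Sum>u\<in>UNIV. (J1 v u - J2 v u) * spin \<sigma> u\<bar> \<le> (\<Sum>u\<in>UNIV. \<bar>(J1 v u - J2 v u) * spin \<sigma> u\<bar>)"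
    by (rule sum_abs)
  also have "\<dots> = (\<Sum>u\<in>UNIV. \<bar>J1 v u - J2 v u\<bar>)" by (simp add: abs_mult)
  finally show ?thesis using e by linarith
qed

lemma powr_convex0:
  fixes p :: real assumes "p \<ge> 1"
  shows "convex_on {0..} (\<lambda>x. x powr p)"
proof (rule convex_onI)
  show "convex {0::real..}" by (simp add: convex_real_interval)
  fix t x y :: real
  assume t: "0 < t" "t < 1" and xy: "x \<in> {0..}" "y \<in> {0..}"
  have tp: "t powr p \<le> t" "(1-t) powr p \<le> 1 - t"
    using t assms by (auto intro!: powr_le_one_le)
  show "((1 - t) *\<^sub>R x + t *\<^sub>R y) powr p \<le> (1 - t) * x powr p + t * y powr p"
  proof (cases "x = 0 \<or> y = 0")
    case True
    then show ?thesis
    proof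
      assume x0: "x = 0"
      have "(t * y) powr p = t powr p * y powr p" using t xy by (simp add: powr_mult)
      also have "\<dots> \<le> t * y powr p" using tp by (intro mult_right_mono) auto
      finally show ?thesis using x0 by simp
    next
      assume y0: "y = 0"
      have "((1-t) * x) powr p = (1-t) powr p * x powr p" using t xy by (simp add: powr_mult)
      also have "\<dots> \<le> (1-t) * x powr p" using tp by (intro mult_right_mono) auto
      finally show ?thesis using y0 by simp
    qed
  next
    case False
    then have "x \<in> {0<..}" "y \<in> {0<..}" using xy by auto
    then show ?thesis using convex_onD[OF powr_convex[OF assms], of t x y] t by simp
  qed
qed



theorem lemma2p2:
  fixes E :: "'v::finite \<Rightarrow> 'v \<Rightarrow> bool"
    and J\<nu> J\<mu> :: "'v \<Rightarrow> 'v \<Rightarrow> real" and h\<nu> h\<mu> :: "'v \<Rightarrow> real"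
    and \<alpha> b :: real
  assumes "\<alpha> \<ge> 1" and "0 < b" and "b \<le> 1"
    and "simple_graph E"
    and "ising_model E J\<nu> h\<nu>" and "ising_model E J\<mu> h\<mu>"
    and "marginally_bounded b (gibbs J\<nu> h\<nu>)"
    and "marginally_bounded b (gibbs J\<mu> h\<mu>)"
  shows "chi_alpha_div \<alpha> (gibbs J\<nu> h\<nu>) (gibbs J\<mu> h\<mu>)
           \<ge> b powr (2 * \<alpha>) / 2 * d_par E J\<nu> h\<nu> J\<mu> h\<mu> powr \<alpha>"
proof -
  note al = assms(1) and b0 = assms(2) and b1 = assms(3) and sg = assms(4)
    and im1 = assms(5) and im2 = assms(6) and mb1 = assms(7) and mb2 = assms(8)
  define nu where "nu = gibbs J\<nu> h\<nu>"
  define mu where "mu = gibbs J\<mu> h\<mu>"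
  have symE: "E u w = E w u" "\<not> E w w" for u w using sg unfolding simple_graph_def by auto
  have sym1: "\<And>u w. J\<nu> u w = J\<nu> w u" and sym2: "\<And>u w. J\<mu> u w = J\<mu> w u"
    using im1 im2 unfolding ising_model_def by auto
  have J10: "J\<nu> w w = 0" and J20: "J\<mu> w w = 0" for w
    using im1 im2 symE(2)[of w] unfolding ising_model_def by auto
  have edge: "J\<nu> v u - J\<mu> v u \<noteq> 0 \<Longrightarrow> E u v" for u v
    using im1 im2 symE(1)[of u v] unfolding ising_model_def by (metis diff_self)
  define T where "T = (\<Sum>\<sigma>\<in>UNIV. \<bar>nu \<sigma> - mu \<sigma>\<bar>)"
  define X where "X v \<sigma> = xf J\<nu> h\<nu> v \<sigma> - xf J\<mu> h\<mu> v \<sigma>" for v \<sigma>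
  define Ev where "Ev v = (\<Sum>\<sigma>\<in>UNIV. mu \<sigma> * \<bar>X v \<sigma>\<bar>)" for v
  have T0: "T \<ge> 0" unfolding T_def by (simp add: sum_nonneg)
  have Ev0: "Ev v \<ge> 0" for v unfolding Ev_def mu_def using gibbs_pos
    by (intro sum_nonneg mult_nonneg_nonneg) (auto intro: less_imp_le)
  have F1: "b * Ev v \<le> T" for v
    unfolding Ev_def T_def
  proof (rule step3)
    show "nu \<sigma> > 0" "mu \<sigma> > 0" for \<sigma> unfolding nu_def mu_def by (auto simp: gibbs_pos)
    show "b * \<bar>X v \<sigma>\<bar> \<le> \<bar>nu \<sigma> / (nu \<sigma> + nu (flip v \<sigma>)) - mu \<sigma> / (mu \<sigma> + mu (flip v \<sigma>))\<bar>" for \<sigma>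
      unfolding X_def nu_def mu_def by (rule pointwise[OF b0 sym1 J10 sym2 J20 mb1 mb2])
    show "X v (flip v \<sigma>) = X v \<sigma>" for \<sigma>
      unfolding X_def flip_def by (simp add: xf_upd J10 J20)
    show "b \<ge> 0" using b0 by simp
  qed
  have F2: "b * (2 * \<bar>J\<nu> v w - J\<mu> v w\<bar>) \<le> Ev v" for v w
    unfolding Ev_def
  proof (rule step5)
    show "mu \<sigma> \<ge> 0" for \<sigma> unfolding mu_def using gibbs_pos less_imp_le by blast
    show "b * (mu \<sigma> + mu (flip w \<sigma>)) \<le> mu \<sigma>" for \<sigma> unfolding mu_def by (rule K[OF mb2])
    show "2 * \<bar>J\<nu> v w - J\<mu> v w\<bar> \<le> \<bar>X v \<sigma> - X v (flip w \<sigma>)\<bar>" for \<sigma>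
      unfolding X_def using xdiff_flip[of J\<nu> h\<nu> v \<sigma> J\<mu> h\<mu> w] by simp
    show "(\<Sum>\<sigma>\<in>UNIV. mu \<sigma>) = 1" unfolding mu_def by (rule gibbs_sum)
    show "b \<ge> 0" using b0 by simp
  qed
  have FJ: "b^2 * \<bar>J\<nu> u v - J\<mu> u v\<bar> \<le> T" for u v
  proof -
    have "b * (b * (2 * \<bar>J\<nu> u v - J\<mu> u v\<bar>)) \<le> b * Ev u"
      using F2[of u v] b0 by (intro mult_left_mono) auto
    moreover have "b^2 * \<bar>J\<nu> u v - J\<mu> u v\<bar> \<le> b * (b * (2 * \<bar>J\<nu> u v - J\<mu> u v\<bar>))"
      using b0 by (simp add: power2_eq_square)
    ultimately show ?thesis using F1[of u] by linarith
  qed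
  have FH: "b^2 * (\<bar>h\<nu> v - h\<mu> v\<bar> / (real (deg E v) + 1)) \<le> T" for v
  proof -
    define S where "S = (\<Sum>u\<in>UNIV. \<bar>J\<nu> v u - J\<mu> v u\<bar>)"
    define N where "N = {u. E u v}"
    have dN: "deg E v = card N" unfolding deg_def N_def by simp
    have hS: "\<bar>h\<nu> v - h\<mu> v\<bar> \<le> Ev v + S"
    proof -
      have "\<bar>h\<nu> v - h\<mu> v\<bar> = (\<Sum>\<sigma>\<in>UNIV. mu \<sigma> * \<bar>h\<nu> v - h\<mu> v\<bar>)"
        unfolding mu_def by (simp add: sum_distrib_right[symmetric] gibbs_sum)
      also have "\<dots> \<le> (\<Sum>\<sigma>\<in>UNIV. mu \<sigma> * (\<bar>X v \<sigma>\<bar> + S))"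
        unfolding X_def S_def mu_def
        by (intro sum_mono mult_left_mono xdiff_h) (auto intro: less_imp_le gibbs_pos)
      also have "\<dots> = Ev v + S"
        unfolding Ev_def mu_def by (simp add: distrib_left sum.distrib sum_distrib_right[symmetric] gibbs_sum)
      finally show ?thesis .
    qed
    have SN: "S = (\<Sum>u\<in>N. \<bar>J\<nu> v u - J\<mu> v u\<bar>)"
      unfolding S_def N_def
      by (rule sum.mono_neutral_right) (use edge in force)+
    have "2 * b * S = (\<Sum>u\<in>N. b * (2 * \<bar>J\<nu> v u - J\<mu> v u\<bar>))"
      unfolding SN by (simp add: sum_distrib_left mult.assoc mult.left_commute)
    also have "\<dots> \<le> (\<Sum>u\<in>N. Ev v)" by (intro sum_mono F2)
    also have "\<dots> = real (deg E v) * Ev v" by (simp add: dN)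
    finally have bS: "2 * b * S \<le> real (deg E v) * Ev v" .
    have "b * \<bar>h\<nu> v - h\<mu> v\<bar> \<le> b * Ev v + b * S"
      using hS b0 by (simp add: distrib_left[symmetric] mult_left_mono)
    also have "\<dots> \<le> (real (deg E v) + 1) * Ev v"
    proof -
      have "0 \<le> real (deg E v) * Ev v" using Ev0[of v] by simp
      moreover have "b * Ev v \<le> Ev v" using b1 Ev0[of v] mult_right_mono[of b 1 "Ev v"] by simp
      ultimately show ?thesis using bS by (simp add: algebra_simps)
    qed
    finally have "b * (b * \<bar>h\<nu> v - h\<mu> v\<bar>) \<le> b * ((real (deg E v) + 1) * Ev v)"
      using b0 by (intro mult_left_mono) auto
    also have "\<dots> \<le> (real (deg E v) + 1) * T"
      using F1[of v] by (simp add: mult.left_commute)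
    finally show ?thesis
      by (simp add: power2_eq_square field_simps)
  qed
  define A where "A = (\<lambda>(u, v). \<bar>J\<nu> u v - J\<mu> u v\<bar>) ` (UNIV :: ('v \<times> 'v) set)"
  define B where "B = (\<lambda>v. \<bar>h\<nu> v - h\<mu> v\<bar> / (real (deg E v) + 1)) ` (UNIV :: 'v set)"
  have dpar: "d_par E J\<nu> h\<nu> J\<mu> h\<mu> = max (Max A) (Max B)" unfolding d_par_def A_def B_def ..
  have MA: "Max A \<in> A" "Max B \<in> B" unfolding A_def B_def by (intro Max_in; simp)+
  obtain p where p: "Max A = (\<lambda>(u, v). \<bar>J\<nu> u v - J\<mu> u v\<bar>) p" using MA(1) A_def by blast
  obtain u0 v0 where uv: "Max A = \<bar>J\<nu> u0 v0 - J\<mu> u0 v0\<bar>" using p by (cases p) auto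
  obtain w0 where w0: "Max B = \<bar>h\<nu> w0 - h\<mu> w0\<bar> / (real (deg E w0) + 1)" using MA(2) B_def by blast
  have A1: "b^2 * Max A \<le> T" "Max A \<ge> 0" using uv FJ by auto
  have B1: "b^2 * Max B \<le> T" "Max B \<ge> 0" using w0 FH by auto
  define d where "d = d_par E J\<nu> h\<nu> J\<mu> h\<mu>"
  have d0: "d \<ge> 0" unfolding d_def dpar using A1 by simp
  have dT: "b^2 * d \<le> T" unfolding d_def dpar using A1 B1 by (simp add: max_def)
  have mupos: "mu \<sigma> > 0" for \<sigma> unfolding mu_def by (rule gibbs_pos)
  have jen: "(\<Sum>\<sigma>\<in>UNIV. mu \<sigma> *\<^sub>R \<bar>nu \<sigma> / mu \<sigma> - 1\<bar>) powr \<alpha> \<le> (\<Sum>\<sigma>\<in>UNIV. mu \<sigma> * \<bar>nu \<sigma> / mu \<sigma> - 1\<bar> powr \<alpha>)"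
  proof (rule convex_on_sum[where C="{0..}" and f="\<lambda>x. x powr \<alpha>" and a=mu and y="\<lambda>\<sigma>. \<bar>nu \<sigma> / mu \<sigma> - 1\<bar>"])
    show "finite (UNIV :: ('v \<Rightarrow> bool) set)" by simp
    show "(UNIV :: ('v \<Rightarrow> bool) set) \<noteq> {}" by simp
    show "convex_on {0..} (\<lambda>x::real. x powr \<alpha>)" by (rule powr_convex0[OF al])
    show "(\<Sum>\<sigma>\<in>UNIV. mu \<sigma>) = 1" unfolding mu_def by (rule gibbs_sum)
    show "mu \<sigma> \<ge> 0" for \<sigma> using mupos[of \<sigma>] by simp
    show "\<bar>nu \<sigma> / mu \<sigma> - 1\<bar> \<in> {0..}" for \<sigma> by simp
  qed
  have eqT: "(\<Sum>\<sigma>\<in>UNIV. mu \<sigma> *\<^sub>R \<bar>nu \<sigma> / mu \<sigma> - 1\<bar>) = T"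
    unfolding T_def
  proof (rule sum.cong)
    fix \<sigma> :: "'v \<Rightarrow> bool"
    have "mu \<sigma> * \<bar>nu \<sigma> / mu \<sigma> - 1\<bar> = \<bar>mu \<sigma> * (nu \<sigma> / mu \<sigma> - 1)\<bar>"
      using mupos[of \<sigma>] by (simp add: abs_mult)
    also have "\<dots> = \<bar>nu \<sigma> - mu \<sigma>\<bar>" using mupos[of \<sigma>] by (simp add: right_diff_distrib)
    finally show "mu \<sigma> *\<^sub>R \<bar>nu \<sigma> / mu \<sigma> - 1\<bar> = \<bar>nu \<sigma> - mu \<sigma>\<bar>" by simp
  qed simp
  have chi: "chi_alpha_div \<alpha> nu mu = (1/2) * (\<Sum>\<sigma>\<in>UNIV. mu \<sigma> * \<bar>nu \<sigma> / mu \<sigma> - 1\<bar> powr \<alpha>)"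
    unfolding chi_alpha_div_def by (simp add: sum_distrib_left mult.left_commute)
  have "b powr (2 * \<alpha>) / 2 * d powr \<alpha> = (1/2) * (b^2 * d) powr \<alpha>"
  proof -
    have "(b^2 * d) powr \<alpha> = (b^2) powr \<alpha> * d powr \<alpha>" using d0 by (simp add: powr_mult)
    also have "(b^2) powr \<alpha> = b powr (2 * \<alpha>)"
    proof -
      have "b powr 2 = b^2" using b0 by simp
      then show ?thesis by (metis powr_powr)
    qed
    finally show ?thesis by simp
  qed
  also have "\<dots> \<le> (1/2) * T powr \<alpha>"
    using dT d0 b0 al by (intro mult_left_mono powr_mono2) auto
  also have "\<dots> \<le> chi_alpha_div \<alpha> nu mu"
    using jen unfolding eqT chi by linarith
  finally show ?thesis unfolding d_def nu_def mu_def by simp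
qed

end
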